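(* Let $r(t) \in \mathbb{Z}[t]$ be a good polynomial. Then $r(1) \cdot \operatorname{Cong}(r(t)) \cdot \operatorname{Discr}_\ast(r(t)) \cdot \operatorname{Prod}_\ast(r(t)) \neq 0$.
   Context: Here $\mathbb{N} = \{1,2,3,\dots\}$. A polynomial $r(t) \in \mathbb{Z}[t]$ is bad if there exist $u \in \mathbb{N}$ and $s(t) \in \mathbb{Z}[t]\setminus \mathbb{Z}$ such that $s(t^{u+1})$ divides $r(0)\cdot r(1)\cdot r(t)$ in $\mathbb{Z}[t]$; otherwise $r(t)$ is good. For $r(t) = \sum_i a_i t^i \in \mathbb{Z}[t]$ and integers $u > j \ge 0$, let $r_{u,j}(t) := \sum_{i \equiv j \bmod u} a_i t^i$. The periodic congruence number $\operatorname{Cong}(r(t))$ is the non-negative generator of the ideal $\mathbb{Z} \cap \bigcap_{1 < u \le \deg(r(t))+1} \big(r_{u,0}(t)\mathbb{Z}[t] + \cdots + r_{u,u-1}(t)\mathbb{Z}[t]\big)$ of $\mathbb{Z}$. If $r(t)$ is constant, $\operatorname{Discr}_\ast(r(t)) := r(t)$ and $\operatorname{Prod}_\ast(r(t)) := 1$. Otherwise let $d = \deg r$, $a$ the leading coefficient, $\lambda_1,\dots,\lambda_l \in \overline{\mathbb{Q}}$ the distinct roots with multiplicities $m_1,\dots,m_l$, $m = \max_i m_i$, and set $\operatorname{Discr}_\ast(r(t)) := a^{1+2d^2}\,(m-1)!\,\prod_{1\le i\ne j\le l}(\lambda_i-\lambda_j)^m$ and $\operatorname{Prod}_\ast(r(t))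 := a^{2d^3}\prod_{1\le i,j\le l,\ r(\lambda_i\lambda_j)\neq 0} r(\lambda_i\lambda_j)$. *)

theory Defs
  imports "HOL-Computational_Algebra.Polynomial" Complex_Main
begin

definition bad_poly :: "int poly \<Rightarrow> bool" where
  "bad_poly r \<longleftrightarrow> (\<exists>u::nat. u \<ge> 1 \<and> (\<exists>s::int poly. degree s > 0 \<and>
      pcompose s (monom 1 (u + 1)) dvd smult (poly r 0 * poly r 1) r))"

definition good_poly :: "int poly \<Rightarrow> bool" where
  "good_poly r \<longleftrightarrow> \<not> bad_poly r"

definition part_poly :: "int poly \<Rightarrow> nat \<Rightarrow> nat \<Rightarrow> int poly" where
  "part_poly r u j = (\<Sum>i\<le>degree r. if i mod u = j then monom (coeff r i) i else 0)"

definition part_ideal :: "int poly \<Rightarrow> nat \<Rightarrow> int poly set" where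
  "part_ideal r u = {p. \<exists>q :: nat \<Rightarrow> int poly. p = (\<Sum>j<u. part_poly r u j * q j)}"

definition cong_ideal :: "int poly \<Rightarrow> int set" where
  "cong_ideal r = {c. \<forall>u. 1 < u \<and> u \<le> degree r + 1 \<longrightarrow> [:c:] \<in> part_ideal r u}"

definition Cong :: "int poly \<Rightarrow> int" where
  "Cong r = (THE g. g \<ge> 0 \<and> cong_ideal r = {c. g dvd c})"

text \<open>Roots are taken in the algebraically closed field C (containing the
  algebraic closure of Q).\<close>
definition croots :: "int poly \<Rightarrow> complex set" where
  "croots r = {z. poly (map_poly of_int r) z = 0}"

definition max_mult :: "int poly \<Rightarrow> nat" where
  "max_mult r = Max ((\<lambda>z. order z (map_poly (of_int :: int \<Rightarrow> complex) r)) ` croots r)"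

definition Discr_star :: "int poly \<Rightarrow> complex" where
  "Discr_star r = (if degree r = 0 then of_int (coeff r 0) else
     of_int (lead_coeff r) ^ (1 + 2 * (degree r)\<^sup>2) * of_nat (fact (max_mult r - 1)) *
     (\<Prod>(x, y) \<in> {(x, y). x \<in> croots r \<and> y \<in> croots r \<and> x \<noteq> y}. (x - y) ^ max_mult r))"

definition Prod_star :: "int poly \<Rightarrow> complex" where
  "Prod_star r = (if degree r = 0 then 1 else
     of_int (lead_coeff r) ^ (2 * degree r ^ 3) *
     (\<Prod>(x, y) \<in> {(x, y). x \<in> croots r \<and> y \<in> croots r \<and>
                          poly (map_poly of_int r) (x * y) \<noteq> 0}.
        poly (map_poly of_int r) (x * y)))"

end

theory Submission imports Defs "Berlekamp_Zassenhaus.Factor_Bound" begin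
hide_const (open) module.smult UnivPoly.monom up_ring.coeff


lemma pcompose_monom_gen: "pcompose (Polynomial.monom c n) q = smult c (q ^ n)"
  by (induction n) (simp_all add: pcompose_pCons monom_Suc monom_0)

lemma coeff_part_poly: "coeff (part_poly r u j) n = (if n mod u = j then coeff r n else 0)"
proof -
  have "coeff (part_poly r u j) n = (\<Sum>i\<le>degree r. if i mod u = j \<and> i = n then coeff r i else 0)"
    unfolding part_poly_def coeff_sum by (intro sum.cong) (auto simp: coeff_monom)
  also have "\<dots> = (if n mod u = j then coeff r n else 0)"
  proof (cases "n \<le> degree r")
    case True
    have "(\<Sum>i\<le>degree r. if i mod u = j \<and> i = n then coeff r i else 0)
       = (\<Sum>i\<le>degree r. if i = n then (if n mod u = j then coeff r n else 0) else 0)"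
      by (intro sum.cong) auto
    then show ?thesis using True by (simp add: sum.delta)
  qed (auto simp: coeff_eq_0 intro!: sum.neutral)
  finally show ?thesis .
qed

lemma sum_part_poly: assumes "u > 0" shows "(\<Sum>j<u. part_poly r u j) = r"
proof (rule poly_eqI)
  fix n
  have "coeff (\<Sum>j<u. part_poly r u j) n = (\<Sum>j<u. if n mod u = j then coeff r n else 0)"
    by (simp add: coeff_sum coeff_part_poly)
  also have "\<dots> = coeff r n" using assms by simp
  finally show "coeff (\<Sum>j<u. part_poly r u j) n = coeff r n" .
qed

definition gpart :: "int poly \<Rightarrow> nat \<Rightarrow> nat \<Rightarrow> int poly" where
  "gpart r u j = (\<Sum>i\<le>degree r. if i mod u = j then Polynomial.monom (coeff r i) (i div u) else 0)"

lemma part_poly_gpart: assumes "j < u"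
  shows "part_poly r u j = Polynomial.monom 1 j * pcompose (gpart r u j) (Polynomial.monom 1 u)"
proof -
  have "Polynomial.monom 1 j * pcompose (gpart r u j) (Polynomial.monom 1 u)
     = (\<Sum>i\<le>degree r. Polynomial.monom 1 j * pcompose (if i mod u = j then Polynomial.monom (coeff r i) (i div u) else 0) (Polynomial.monom 1 u))"
    unfolding gpart_def pcompose_sum sum_distrib_left ..
  also have "\<dots> = (\<Sum>i\<le>degree r. if i mod u = j then Polynomial.monom (coeff r i) i else 0)"
  proof (intro sum.cong refl)
    fix i assume "i \<in> {..degree r}"
    show "Polynomial.monom 1 j * pcompose (if i mod u = j then Polynomial.monom (coeff r i) (i div u) else 0) (Polynomial.monom 1 u)
      = (if i mod u = j then Polynomial.monom (coeff r i) i else 0)"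
    proof (cases "i mod u = j")
      case True
      have "j + u * (i div u) = i" using True by (metis mod_mult_div_eq add.commute)
      then show ?thesis using True
        by (simp add: pcompose_monom_gen Polynomial.monom_power mult_monom mult.commute smult_monom)
    qed simp
  qed
  finally show ?thesis unfolding part_poly_def by simp
qed

lemma part_ideal_add: "a \<in> part_ideal r u \<Longrightarrow> b \<in> part_ideal r u \<Longrightarrow> a + b \<in> part_ideal r u"
proof -
  assume "a \<in> part_ideal r u" "b \<in> part_ideal r u"
  then obtain qa qb where "a = (\<Sum>j<u. part_poly r u j * qa j)" "b = (\<Sum>j<u. part_poly r u j * qb j)"
    unfolding part_ideal_def by auto
  then have "a + b = (\<Sum>j<u. part_poly r u j * (qa j + qb j))"
    by (simp add: distrib_left sum.distrib)
  then show ?thesis unfolding part_ideal_def by (intro CollectI exI[of _ "\<lambda>j. qa j + qb j"])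
qed

lemma part_ideal_mult: "a \<in> part_ideal r u \<Longrightarrow> a * k \<in> part_ideal r u"
proof -
  assume "a \<in> part_ideal r u"
  then obtain qa where "a = (\<Sum>j<u. part_poly r u j * qa j)"
    unfolding part_ideal_def by auto
  then have "a * k = (\<Sum>j<u. part_poly r u j * (qa j * k))"
    by (simp add: sum_distrib_right mult.assoc)
  then show ?thesis unfolding part_ideal_def by (intro CollectI exI[of _ "\<lambda>j. qa j * k"])
qed

lemma part_ideal_gen: "j < u \<Longrightarrow> part_poly r u j \<in> part_ideal r u"
proof -
  assume j: "j < u"
  have "part_poly r u j = (\<Sum>i<u. part_poly r u i * (if i = j then 1 else 0))"
    using j by (simp add: if_distrib sum.delta cong: if_cong)
  then show ?thesis unfolding part_ideal_def by (intro CollectI exI[of _ "\<lambda>i. if i = j then 1 else 0"])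
qed

lemma Gcd_comb:
  fixes F :: "nat \<Rightarrow> 'a :: euclidean_ring_gcd"
  shows "\<exists>h. Gcd (F ` {..<n}) = (\<Sum>j<n. F j * h j)"
proof (induction n)
  case 0
  then show ?case by simp
next
  case (Suc n)
  then obtain h where h: "Gcd (F ` {..<n}) = (\<Sum>j<n. F j * h j)" by blast
  define a where "a = fst (bezout_coefficients (F n) (Gcd (F ` {..<n})))"
  define b where "b = snd (bezout_coefficients (F n) (Gcd (F ` {..<n})))"
  have "Gcd (F ` {..<Suc n}) = gcd (F n) (Gcd (F ` {..<n}))"
    by (simp add: lessThan_Suc)
  also have "\<dots> = a * F n + b * Gcd (F ` {..<n})"
    unfolding a_def b_def by (simp add: bezout_coefficients_fst_snd)
  also have "\<dots> = (\<Sum>j<Suc n. F j * (if j = n then a else b * h j))"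
    by (simp add: h sum_distrib_left algebra_simps)
  finally show ?case by (intro exI[of _ "\<lambda>j. if j = n then a else b * h j"])
qed

lemma clear_denoms:
  fixes h :: "nat \<Rightarrow> rat poly"
  shows "\<exists>D::int. D > 0 \<and> (\<exists>H. \<forall>j<n. map_poly rat_of_int (H j) = smult (of_int D) (h j))"
proof (induction n)
  case 0
  show ?case by (rule exI[of _ 1]) simp
next
  case (Suc n)
  then obtain D H where D: "D > 0" and H: "\<forall>j<n. map_poly rat_of_int (H j) = smult (of_int D) (h j)" by blast
  obtain d q where dq: "rat_to_int_poly (h n) = (d, q)" by force
  from rat_to_int_poly[OF dq] have hn: "h n = smult (inverse (of_int d)) (map_poly of_int q)" and d: "d > 0" by auto
  define H' where "H' j = (if j = n then smult D q else smult d (H j))" for j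
  have "\<forall>j<Suc n. map_poly rat_of_int (H' j) = smult (of_int (D * d)) (h j)"
  proof (intro allI impI)
    fix j assume "j < Suc n"
    show "map_poly rat_of_int (H' j) = smult (of_int (D * d)) (h j)"
    proof (cases "j = n")
      case True
      have dne: "rat_of_int d \<noteq> 0" using d by simp
      then show ?thesis using True by (simp add: H'_def hn of_int_hom.map_poly_hom_smult field_simps)
    next
      case False
      with \<open>j < Suc n\<close> have "j < n" by simp
      then show ?thesis using H False by (simp add: H'_def of_int_hom.map_poly_hom_smult mult.commute)
    qed
  qed
  then show ?case using D d by (intro exI[of _ "D * d"]) auto
qed

lemma key:
  fixes r :: "int poly"
  assumes u: "2 \<le> u" and r0: "poly r 0 \<noteq> 0"
    and nb: "\<not> (\<exists>s::int poly. degree s > 0 \<and> pcompose s (Polynomial.monom 1 u) dvd r)"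
  shows "\<exists>c. c \<noteq> 0 \<and> [:c:] \<in> part_ideal r u"
proof -
  define g where "g = gpart r u"
  define F where "F j = map_poly rat_of_int (g j)" for j
  define G where "G = Gcd (F ` {..<u})"
  have u0: "u > 0" using u by simp
  have P: "part_poly r u j = Polynomial.monom 1 j * pcompose (g j) (Polynomial.monom 1 u)" if "j < u" for j
    using part_poly_gpart[OF that] unfolding g_def .
  have S: "(\<Sum>j<u. part_poly r u j) = r" using sum_part_poly[OF u0] .
  have "poly (part_poly r u 0) 0 = poly r 0"
    by (simp add: poly_0_coeff_0 coeff_part_poly)
  moreover have "poly (part_poly r u 0) 0 = poly (g 0) 0"
    using P[OF u0] u0 by (simp add: poly_pcompose poly_monom zero_power)
  ultimately have g0: "poly (g 0) 0 = poly r 0" by simp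
  then have "g 0 \<noteq> 0" using r0 by auto
  then have "F 0 \<noteq> 0" unfolding F_def by simp
  then have G0: "G \<noteq> 0" unfolding G_def using u0 by (auto simp: Gcd_0_iff)
  have Gdvd: "G dvd F j" if "j < u" for j unfolding G_def using that by (intro Gcd_dvd) auto
  show ?thesis
  proof (cases "degree G = 0")
    case False
    obtain d s where ds: "rat_to_normalized_int_poly G = (d, s)" by force
    have degs: "degree s > 0" using rat_to_normalized_int_poly(4)[OF ds] False by simp
    have sdvd: "s dvd g j" if "j < u" for j
    proof -
      from Gdvd[OF that] obtain k where "F j = G * k" by (auto elim: dvdE)
      then have "map_poly rat_of_int (g j) = G * k" unfolding F_def .
      from rat_to_int_factor_explicit[OF this ds] obtain r' where "g j = s * smult (content (g j)) r'" by blast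
      then show ?thesis by (rule dvdI)
    qed
    then have "pcompose s (Polynomial.monom 1 u) dvd part_poly r u j" if "j < u" for j
    proof -
      from sdvd[OF that] obtain k where "g j = s * k" by (auto elim: dvdE)
      then have "pcompose (g j) (Polynomial.monom 1 u) = pcompose s (Polynomial.monom 1 u) * pcompose k (Polynomial.monom 1 u)"
        by (simp add: pcompose_mult)
      then have "part_poly r u j = pcompose s (Polynomial.monom 1 u) * (Polynomial.monom 1 j * pcompose k (Polynomial.monom 1 u))"
        using P[OF that] by (simp add: ac_simps)
      then show ?thesis by (rule dvdI)
    qed
    then have "pcompose s (Polynomial.monom 1 u) dvd (\<Sum>j<u. part_poly r u j)" by (intro dvd_sum) auto
    then have "pcompose s (Polynomial.monom 1 u) dvd r" by (simp only: S)
    with nb degs show ?thesis by blast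
  next
    case True
    then obtain c0 where c0: "G = [:c0:]" by (metis degree_eq_zeroE)
    with G0 have "c0 \<noteq> 0" by simp
    obtain h where h: "G = (\<Sum>j<u. F j * h j)" unfolding G_def using Gcd_comb by blast
    define h' where "h' j = smult (inverse c0) (h j)" for j
    have "1 = smult (inverse c0) G" using c0 \<open>c0 \<noteq> 0\<close> by simp
    also have "\<dots> = (\<Sum>j<u. F j * h' j)" unfolding h h'_def by (simp add: smult_sum2 mult_smult_right)
    finally have one: "1 = (\<Sum>j<u. F j * h' j)" .
    obtain D H where D: "D > (0::int)" and H: "\<forall>j<u. map_poly rat_of_int (H j) = smult (of_int D) (h' j)"
      using clear_denoms by blast
    have "map_poly rat_of_int [:D:] = smult (of_int D) 1"
      by (intro poly_eqI) (simp add: coeff_map_poly coeff_pCons split: nat.split)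
    also have "\<dots> = (\<Sum>j<u. F j * smult (of_int D) (h' j))"
      unfolding one by (simp add: smult_sum2 mult_smult_right)
    also have "\<dots> = (\<Sum>j<u. map_poly rat_of_int (g j * H j))"
      using H unfolding F_def by (intro sum.cong) (auto simp: of_int_poly_hom.hom_mult)
    also have "\<dots> = map_poly rat_of_int (\<Sum>j<u. g j * H j)"
      by (simp add: of_int_poly_hom.hom_sum)
    finally have DH: "[:D:] = (\<Sum>j<u. g j * H j)" by simp
    define X where "X = (Polynomial.monom 1 u :: int poly)"
    have "(\<Sum>j<u. part_poly r u j * (Polynomial.monom 1 (u - j) * pcompose (H j) X))
       = (\<Sum>j<u. X * pcompose (g j * H j) X)"
    proof (intro sum.cong refl)
      fix j assume "j \<in> {..<u}"
      then have j: "j < u" by simp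
      have "Polynomial.monom (1::int) j * Polynomial.monom 1 (u - j) = X"
        unfolding X_def using j by (simp add: mult_monom)
      then show "part_poly r u j * (Polynomial.monom 1 (u - j) * pcompose (H j) X) = X * pcompose (g j * H j) X"
        unfolding P[OF j] X_def[symmetric] pcompose_mult
        by (metis mult.assoc mult.commute)
    qed
    also have "\<dots> = X * pcompose [:D:] X" unfolding DH pcompose_sum sum_distrib_left ..
    also have "\<dots> = smult D X" by simp
    finally have "smult D X \<in> part_ideal r u" unfolding part_ideal_def
      by (intro CollectI exI[of _ "\<lambda>j. Polynomial.monom 1 (u - j) * pcompose (H j) X"]) simp
    define p0 where "p0 = part_poly r u 0"
    define a0 where "a0 = poly r 0"
    have p0I: "p0 \<in> part_ideal r u" unfolding p0_def using u0 by (rule part_ideal_gen)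
    define y where "y = [:a0:] - p0"
    have "poly y 0 = 0" unfolding y_def p0_def a0_def
      by (simp add: poly_0_coeff_0 coeff_part_poly)
    then have "[:0, 1:] dvd y" using poly_eq_0_iff_dvd[of y 0] by simp
    then have "[:0, 1:] ^ u dvd y ^ u" by (rule dvd_power_same)
    then obtain m where m: "y ^ u = X * m" unfolding X_def by (auto simp: monom_altdef elim: dvdE)
    define S where "S = (\<Sum>i<u. y ^ (u - Suc i) * [:a0:] ^ i)"
    have "[:a0:] ^ u - y ^ u = ([:a0:] - y) * (\<Sum>i<u. y ^ (u - Suc i) * [:a0:] ^ i)"
      by (rule power_diff_sumr2)
    also have "[:a0:] - y = p0" unfolding y_def by simp
    finally have "[:a0:] ^ u - y ^ u = p0 * S" unfolding S_def .
    then have e1: "[:a0 ^ u:] = X * m + p0 * S"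
      using m by (simp add: algebra_simps flip: poly_const_pow)
    have "[:D * a0 ^ u:] = smult D [:a0 ^ u:]" by simp
    also have "\<dots> = smult D X * m + p0 * (smult D S)"
      unfolding e1 by (simp add: smult_add_right mult_smult_left mult_smult_right)
    finally have e2: "[:D * a0 ^ u:] = smult D X * m + p0 * (smult D S)" .
    have I1: "smult D X * m + p0 * (smult D S) \<in> part_ideal r u"
      by (intro part_ideal_add part_ideal_mult p0I \<open>smult D X \<in> part_ideal r u\<close>)
    have nz: "D * a0 ^ u \<noteq> 0" using D r0 unfolding a0_def by simp
    show ?thesis using I1 nz unfolding e2[symmetric] by blast
  qed
qed


lemma good_r01: assumes "good_poly r" shows "poly r 0 * poly r 1 \<noteq> 0"
proof
  assume "poly r 0 * poly r 1 = 0"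
  then have z: "smult (poly r 0 * poly r 1) r = 0" by simp
  have "pcompose [:0, 1:] (Polynomial.monom 1 (1 + 1)) dvd smult (poly r 0 * poly r 1) r"
    by (simp only: z dvd_0_right)
  then have "bad_poly r" unfolding bad_poly_def by (intro exI[of _ 1] conjI exI[of _ "[:0, 1:]"]) auto
  with assms show False unfolding good_poly_def by simp
qed

lemma good_nb: assumes "good_poly r" "2 \<le> u"
  shows "\<not> (\<exists>s::int poly. degree s > 0 \<and> pcompose s (Polynomial.monom 1 u) dvd r)"
proof
  assume "\<exists>s::int poly. degree s > 0 \<and> pcompose s (Polynomial.monom 1 u) dvd r"
  then obtain s :: "int poly" where s: "degree s > 0" "pcompose s (Polynomial.monom 1 u) dvd r" by blast
  have "pcompose s (Polynomial.monom 1 ((u - 1) + 1)) dvd smult (poly r 0 * poly r 1) r"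
    using s(2) assms(2) by (simp add: dvd_smult)
  then have "bad_poly r" unfolding bad_poly_def using s(1) assms(2)
    by (intro exI[of _ "u - 1"] conjI exI[of _ s]) auto
  with assms show False unfolding good_poly_def by simp
qed

lemma int_ideal_principal:
  fixes S :: "int set"
  assumes sub: "\<And>a b. a \<in> S \<Longrightarrow> b \<in> S \<Longrightarrow> a - b \<in> S"
    and mul: "\<And>a k. a \<in> S \<Longrightarrow> k * a \<in> S"
    and x: "x \<in> S" "x \<noteq> 0"
  shows "\<exists>g>0. S = {c. g dvd c}"
proof -
  have ax: "\<bar>x\<bar> \<in> S" using mul[OF x(1), of "sgn x"] by (metis abs_sgn mult.commute)
  define P where "P n \<longleftrightarrow> n > 0 \<and> int n \<in> S" for n
  have Px: "P (nat \<bar>x\<bar>)" unfolding P_def using ax x(2) by simp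
  define n where "n = (LEAST n. P n)"
  have Pn: "P n" unfolding n_def using Px by (rule LeastI)
  define g where "g = int n"
  have g: "g > 0" "g \<in> S" using Pn unfolding P_def g_def by auto
  have "S = {c. g dvd c}"
  proof (intro equalityI subsetI)
    fix c assume c: "c \<in> S"
    have "c mod g = c - (c div g) * g" by (simp add: minus_div_mult_eq_mod)
    then have cm: "c mod g \<in> S" using sub[OF c mul[OF g(2)]] by simp
    have "c mod g = 0"
    proof (rule ccontr)
      assume "c mod g \<noteq> 0"
      then have "c mod g > 0" using g(1) pos_mod_sign[of g c] by linarith
      then have "P (nat (c mod g))" unfolding P_def using cm by simp
      then have "n \<le> nat (c mod g)" unfolding n_def by (rule Least_le)
      then have "int n \<le> c mod g" using \<open>c mod g > 0\<close> by (simp add: le_nat_iff)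
      moreover have "c mod g < g" using g(1) by simp
      ultimately show False unfolding g_def by linarith
    qed
    then show "c \<in> {c. g dvd c}" by (simp add: dvd_eq_mod_eq_0)
  next
    fix c assume "c \<in> {c. g dvd c}"
    then obtain k where "c = g * k" by (auto elim: dvdE)
    then show "c \<in> S" using mul[OF g(2), of k] by (simp add: mult.commute)
  qed
  with g show ?thesis by blast
qed

lemma cong_nonzero: assumes "good_poly r" shows "Cong r \<noteq> 0"
proof -
  have r0: "poly r 0 \<noteq> 0" using good_r01[OF assms] by simp
  define U where "U = {2..degree r + 1}"
  have "\<forall>u\<in>U. \<exists>c. c \<noteq> 0 \<and> [:c:] \<in> part_ideal r u"
    using key[OF _ r0 good_nb[OF assms]] unfolding U_def by auto
  then obtain c where c: "\<And>u. u \<in> U \<Longrightarrow> c u \<noteq> 0 \<and> [:c u:] \<in> part_ideal r u" by metis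
  define C where "C = (\<Prod>u\<in>U. c u)"
  have C0: "C \<noteq> 0" unfolding C_def U_def using c U_def by (simp add: prod_zero_iff)
  have CS: "C \<in> cong_ideal r"
    unfolding cong_ideal_def
  proof (intro CollectI allI impI)
    fix u assume "1 < u \<and> u \<le> degree r + 1"
    then have u: "u \<in> U" unfolding U_def by auto
    have "finite U" unfolding U_def by simp
    have "C = c u * (\<Prod>v\<in>U - {u}. c v)" unfolding C_def using prod.remove[OF \<open>finite U\<close> u] .
    then have e: "[:C:] = [:c u:] * [:\<Prod>v\<in>U - {u}. c v:]" by simp
    have cu: "[:c u:] \<in> part_ideal r u" using c[OF u] by blast
    show "[:C:] \<in> part_ideal r u" unfolding e by (rule part_ideal_mult[OF cu])
  qed
  have sub: "a - b \<in> cong_ideal r" if ab: "a \<in> cong_ideal r" "b \<in> cong_ideal r" for a b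
  proof -
    have "[:a - b:] \<in> part_ideal r u" if u: "1 < u \<and> u \<le> degree r + 1" for u
    proof -
      have e: "[:a - b:] = [:a:] + [:b:] * [:-1:]" by simp
      have A: "[:a:] \<in> part_ideal r u" "[:b:] \<in> part_ideal r u" using ab u unfolding cong_ideal_def by auto
      show ?thesis unfolding e by (intro part_ideal_add part_ideal_mult A)
    qed
    then show ?thesis unfolding cong_ideal_def by blast
  qed
  have mul: "k * a \<in> cong_ideal r" if ab: "a \<in> cong_ideal r" for a k
  proof -
    have "[:k * a:] \<in> part_ideal r u" if u: "1 < u \<and> u \<le> degree r + 1" for u
    proof -
      have e: "[:k * a:] = [:a:] * [:k:]" by simp
      have A: "[:a:] \<in> part_ideal r u" using ab u unfolding cong_ideal_def by auto
      show ?thesis unfolding e by (intro part_ideal_mult A)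
    qed
    then show ?thesis unfolding cong_ideal_def by blast
  qed
  obtain g where g: "g > 0" "cong_ideal r = {c. g dvd c}"
    using int_ideal_principal[OF sub mul CS C0] by blast
  have "Cong r = g" unfolding Cong_def
  proof (rule the_equality)
    show "0 \<le> g \<and> cong_ideal r = {c. g dvd c}" using g by simp
  next
    fix g' assume g': "0 \<le> g' \<and> cong_ideal r = {c. g' dvd c}"
    have "g' dvd g" using g g' by auto
    moreover have "g dvd g'" using g g' by auto
    ultimately show "g' = g" using g g' by (intro zdvd_antisym_nonneg) auto
  qed
  with g show ?thesis by simp
qed

lemma prod_nz: "(\<And>x. x \<in> A \<Longrightarrow> f x \<noteq> (0::complex)) \<Longrightarrow> prod f A \<noteq> 0"
  by (cases "finite A") (auto simp: prod_zero_iff)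

theorem proposition1p9:
  fixes r :: "int poly"
  assumes "good_poly r"
  shows "of_int (poly r 1 * Cong r) * Discr_star r * Prod_star r \<noteq> 0"
proof -
  have r01: "poly r 0 \<noteq> 0" "poly r 1 \<noteq> 0" using good_r01[OF assms] by auto
  then have rnz: "r \<noteq> 0" by auto
  have D: "Discr_star r \<noteq> 0"
  proof (cases "degree r = 0")
    case True
    then show ?thesis using r01 unfolding Discr_star_def by (simp add: poly_0_coeff_0)
  next
    case False
    have "(\<Prod>(x, y) \<in> {(x, y). x \<in> croots r \<and> y \<in> croots r \<and> x \<noteq> y}. (x - y) ^ max_mult r) \<noteq> 0"
      by (rule prod_nz) auto
    then show ?thesis using False rnz unfolding Discr_star_def by simp
  qed
  have P: "Prod_star r \<noteq> 0"
  proof (cases "degree r = 0")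
    case True
    then show ?thesis unfolding Prod_star_def by simp
  next
    case False
    have "(\<Prod>(x, y) \<in> {(x, y). x \<in> croots r \<and> y \<in> croots r \<and>
                          poly (map_poly of_int r) (x * y) \<noteq> 0}.
        poly (map_poly (of_int :: int \<Rightarrow> complex) r) (x * y)) \<noteq> 0"
      by (rule prod_nz) auto
    then show ?thesis using False rnz unfolding Prod_star_def by simp
  qed
  show ?thesis using r01 cong_nonzero[OF assms] D P by simp
qed

end
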